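(* For tasks $m=1,\ldots,T$, let $L(w_{m0},\bm{w}_m)$ be a differentiable loss (the negative log-likelihood of a generalized linear model with intercept $w_{m0}\in\mathbb{R}$ and coefficient vector $\bm{w}_m\in\mathbb{R}^p$ fitted to data of size $n_m$). Let $\mathcal{E}$ be a set of task pairs with weights $r_{m_1,m_2}\ge0$, let $\lambda_1>0$, $\lambda_2,\lambda_3\ge0$, $\gamma$ be fixed, and let $P(\cdot;\lambda,\gamma)$ be a (possibly non-convex) group penalty with associated group-thresholding function $\bm{\Theta}(\cdot;\lambda,\gamma)$; set $\bm{\psi}(\bm{o};\lambda,\gamma)=\bm{o}-\bm{\Theta}(\bm{o};\lambda,\gamma)$. Define $$L^{\mathrm{MR}}(\bm{w}_0,W,U,O)=\sum_{m=1}^T\frac{1}{n_m}L(w_{m0},\bm{w}_m)+\frac{\lambda_1}{2}\sum_{m=1}^T\|\bm{w}_m-\bm{u}_m-\bm{o}_m\|_2^2+\lambda_2\sum_{(m_1,m_2)\in\mathcal{E}}r_{m_1,m_2}\|\bm{u}_{m_1}-\bm{u}_{m_2}\|_2+\sum_{m=1}^T P(\bm{o}_m;\lambda_3,\gamma),$$ with $\bm w_0=(w_{10},\dots,w_{T0})^\top$, $W=(\bm{w}_1,\ldots,\bm{w}_T)^\top$, $U=(\bm{u}_1,\ldots,\bm{u}_T)^\top$, $O=(\bm{o}_1,\ldots,\bm{o}_T)^\top$. Suppose $(\widehat{\bm{w}}_0,\widehat W,\widehat U,\widehat O)$ is a convergence (fixed) point of the block coordinate descent scheme that cyclically minimizes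 $L^{\mathrm{MR}}$ over $(\bm{w}_0,W)$, then over $U$, then updates $O$; precisely, assume (i) for each $m$, $(\widehat w_{m0},\widehat{\bm{w}}_m)\in\arg\min_{w_{m0},\bm{w}_m}\{\frac1{n_m}L(w_{m0},\bm{w}_m)+\frac{\lambda_1}{2}\|\bm{w}_m-\widehat{\bm{u}}_m-\widehat{\bm{o}}_m\|_2^2\}$; (ii) $\widehat U\in\arg\min_U L^{\mathrm{MR}}(\widehat{\bm{w}}_0,\widehat W,U,\widehat O)$; (iii) $\widehat{\bm{o}}_m=\bm{\Theta}(\widehat{\bm{w}}_m-\widehat{\bm{u}}_m;\lambda_3/\lambda_1,\gamma)$ for each $m$. Then, writing $\bm{w}_m'=(w_{m0},\bm{w}_m^\top)^\top$, $$\nabla_{\bm{w}_m'}\Big(\frac{1}{n_m}L(w_{m0},\bm{w}_m)\Big)\Big|_{\bm{w}_m'=\widehat{\bm{w}}_m'}+\lambda_1\begin{pmatrix}0\\ \bm{\psi}(\widehat{\bm{w}}_m-\widehat{\bm{u}}_m;\lambda_3/\lambda_1,\gamma)\end{pmatrix}=\bm{0},\quad m=1,\ldots,T,$$ and $$\bm{0}\in-\lambda_1\Psi(\widehat W-\widehat U;\lambda_3/\lambda_1,\gamma)+\lambda_2\,\partial g(\widehat U),$$ where $g(U)=\sum_{(m_1,m_2)\in\mathcal{E}}r_{m_1,m_2}\|\bm{u}_{m_1}-\bm{u}_{m_2}\|_2$ as a function of $\mathrm{vec}(U)=(\bm{u}_1^\top,\ldots,\bm{u}_T^\top)^\top$,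 $\partial g$ is its convex subdifferential, and $\Psi(\widehat W-\widehat U;\lambda,\gamma)=(\bm{\psi}(\widehat{\bm{w}}_1-\widehat{\bm{u}}_1;\lambda,\gamma)^\top,\ldots,\bm{\psi}(\widehat{\bm{w}}_T-\widehat{\bm{u}}_T;\lambda,\gamma)^\top)^\top$.
   Context: The group-thresholding function associated with the penalty $P$ is the map $\bm{\Theta}(\bm{z};\lambda,\gamma)$ giving the minimizer of $\tfrac12\|\bm{z}-\bm{o}\|_2^2+P(\bm{o};\lambda,\gamma)$ over $\bm{o}\in\mathbb{R}^p$ (e.g. for group lasso $\bm\Theta(\bm z;\lambda)=\max(0,1-\lambda/\|\bm z\|_2)\bm z$). The function $g$ equals $\|D\,\mathrm{vec}(U)\|_{2,1}$ with $D=A_r\otimes I_p$, $A_r$ the $|\mathcal{E}|\times T$ matrix whose row for $(m_1,m_2)$ is $r_{m_1,m_2}$ times the vector with $+1$ at $m_1$, $-1$ at $m_2$, zeros elsewhere, and $\|\cdot\|_{2,1}$ the sum of Euclidean norms of consecutive length-$p$ blocks. *)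

theory Defs
  imports "HOL-Analysis.Analysis"
begin

text \<open>Tasks are indexed by a finite type 'm (T = CARD('m)), coordinates by a finite type 'p.
  Row m of W, U, O is W $ m etc.; the intercepts form w0 :: real^'m.\<close>

definition is_thresholding ::
  "(real^'p \<Rightarrow> real \<Rightarrow> real \<Rightarrow> real) \<Rightarrow> (real^'p \<Rightarrow> real \<Rightarrow> real \<Rightarrow> real^'p) \<Rightarrow> real \<Rightarrow> bool" where
  "is_thresholding P Theta gamma \<longleftrightarrow>
     (\<forall>z lam v. lam \<ge> 0 \<longrightarrow>
        (1/2) * (norm (z - Theta z lam gamma))\<^sup>2 + P (Theta z lam gamma) lam gamma
          \<le> (1/2) * (norm (z - v))\<^sup>2 + P v lam gamma)"

definition psi :: "(real^'p \<Rightarrow> real \<Rightarrow> real \<Rightarrow> real^'p) \<Rightarrow> real^'p \<Rightarrow> real \<Rightarrow> real \<Rightarrow> real^'p" where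
  "psi Theta v lam gamma = v - Theta v lam gamma"

definition Psi :: "(real^'p \<Rightarrow> real \<Rightarrow> real \<Rightarrow> real^'p) \<Rightarrow> real^'p^'m \<Rightarrow> real \<Rightarrow> real \<Rightarrow> real^'p^'m" where
  "Psi Theta V lam gamma = (\<chi> m. psi Theta (V $ m) lam gamma)"

definition gfun :: "('m \<times> 'm) set \<Rightarrow> ('m \<Rightarrow> 'm \<Rightarrow> real) \<Rightarrow> real^'p^'m \<Rightarrow> real" where
  "gfun E r U = (\<Sum>(m1, m2)\<in>E. r m1 m2 * norm (U $ m1 - U $ m2))"

text \<open>Convex subdifferential (inner product on real^'p^'m is that of vec(U)).\<close>
definition subdiff :: "('a::real_inner \<Rightarrow> real) \<Rightarrow> 'a \<Rightarrow> 'a set" where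
  "subdiff f x = {s. \<forall>y. f y \<ge> f x + inner s (y - x)}"

definition LMR ::
  "('m \<Rightarrow> real \<Rightarrow> real^'p \<Rightarrow> real) \<Rightarrow> ('m \<Rightarrow> nat) \<Rightarrow> ('m \<times> 'm) set \<Rightarrow> ('m \<Rightarrow> 'm \<Rightarrow> real)
   \<Rightarrow> (real^'p \<Rightarrow> real \<Rightarrow> real \<Rightarrow> real) \<Rightarrow> real \<Rightarrow> real \<Rightarrow> real \<Rightarrow> real
   \<Rightarrow> real^'m \<Rightarrow> real^'p^'m \<Rightarrow> real^'p^'m \<Rightarrow> real^'p^'m \<Rightarrow> real" where
  "LMR L n E r P lam1 lam2 lam3 gamma w0 W U Om =
     (\<Sum>m\<in>UNIV. L m (w0 $ m) (W $ m) / real (n m))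
     + lam1 / 2 * (\<Sum>m\<in>UNIV. (norm (W $ m - U $ m - Om $ m))\<^sup>2)
     + lam2 * (\<Sum>(m1, m2)\<in>E. r m1 m2 * norm (U $ m1 - U $ m2))
     + (\<Sum>m\<in>UNIV. P (Om $ m) lam3 gamma)"

end

theory Submission imports Defs begin

lemma norm_subgrad:
  fixes x y :: "'a::real_inner"
  shows "norm y \<ge> norm x + inner (if x = 0 then 0 else (1/norm x) *\<^sub>R x) (y - x)"
proof (cases "x = 0")
  case True then show ?thesis by simp
next
  case False
  have "inner x y \<le> norm x * norm y" by (rule norm_cauchy_schwarz)
  moreover have "inner x x = norm x * norm x" by (simp add: power2_eq_square[symmetric] power2_norm_eq_inner)
  moreover have "norm x > 0" using False by simp
  ultimately show ?thesis using False
    by (simp add: inner_diff_right field_simps)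
qed

lemma inner_edge:
  fixes Z :: "real^'p^'m::finite" and d :: "real^'p"
  shows "inner (\<chi> m. (if m = a then d else 0) - (if m = b then d else 0)) Z = inner d (Z $ a) - inner d (Z $ b)"
proof -
  have "inner (\<chi> m. (if m = a then d else 0) - (if m = b then d else 0)) Z
     = (\<Sum>m\<in>UNIV. inner ((if m = a then d else 0) - (if m = b then d else 0)) (Z $ m))"
    by (subst inner_vec_def) simp
  also have "\<dots> = (\<Sum>m\<in>UNIV. (if m = a then inner d (Z $ m) else 0)) - (\<Sum>m\<in>UNIV. (if m = b then inner d (Z $ m) else 0))"
    by (simp add: inner_diff_left sum_subtractf if_distrib[of "\<lambda>v. inner v _"] cong: if_cong)
  also have "\<dots> = inner d (Z $ a) - inner d (Z $ b)" by simp
  finally show ?thesis .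
qed

lemma gfun_subgrad_exists:
  fixes E :: "('m::finite \<times> 'm) set" and U :: "real^'p^'m"
  assumes r: "\<And>a b. (a, b) \<in> E \<Longrightarrow> r a b \<ge> 0"
  shows "\<exists>s. s \<in> subdiff (gfun E r) U"
proof -
  define d where "d = (\<lambda>a b. let x = U $ a - U $ b in if x = 0 then 0 else (1/norm x) *\<^sub>R x)"
  define S where "S = (\<lambda>(a,b). r a b *\<^sub>R (\<chi> m. (if m = a then d a b else 0) - (if m = b then d a b else 0)))"
  have edge: "r a b * norm (Y $ a - Y $ b) \<ge> r a b * norm (U $ a - U $ b) + inner (S (a,b)) (Y - U)"
    if "(a,b) \<in> E" for a b and Y :: "real^'p^'m"
  proof -
    have "norm (Y $ a - Y $ b) \<ge> norm (U $ a - U $ b) + inner (d a b) ((Y $ a - Y $ b) - (U $ a - U $ b))"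
      unfolding d_def Let_def by (rule norm_subgrad)
    then have "r a b * norm (Y $ a - Y $ b) \<ge> r a b * (norm (U $ a - U $ b) + inner (d a b) ((Y $ a - Y $ b) - (U $ a - U $ b)))"
      using r[OF that] by (rule mult_left_mono)
    moreover have "inner (S (a,b)) (Y - U) = r a b * inner (d a b) ((Y $ a - Y $ b) - (U $ a - U $ b))"
      unfolding S_def by (simp add: inner_edge inner_diff_right right_diff_distrib)
    ultimately show ?thesis by (simp add: right_diff_distrib distrib_left)
  qed
  have "finite E" by simp
  show ?thesis
  proof (intro exI, unfold subdiff_def, clarify)
    fix Y :: "real^'p^'m"
    have "gfun E r U + inner (\<Sum>e\<in>E. S e) (Y - U) = (\<Sum>e\<in>E. (case e of (a,b) \<Rightarrow> r a b * norm (U $ a - U $ b)) + inner (S e) (Y - U))"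
      unfolding gfun_def by (simp add: inner_sum_left sum.distrib)
    also have "\<dots> \<le> (\<Sum>e\<in>E. (case e of (a,b) \<Rightarrow> r a b * norm (Y $ a - Y $ b)))"
      by (rule sum_mono) (use edge in auto)
    also have "\<dots> = gfun E r Y" unfolding gfun_def by simp
    finally show "gfun E r U + inner (\<Sum>e\<in>E. S e) (Y - U) \<le> gfun E r Y" .
  qed
qed

lemma sumsq_vec: fixes x :: "real^'p^'m::finite"
  shows "(\<Sum>m\<in>UNIV. (norm (x $ m))\<^sup>2) = (norm x)\<^sup>2"
  by (simp add: power2_norm_eq_inner inner_vec_def[of x x])

lemma small_t:
  fixes c K :: real
  assumes "\<And>t. 0 < t \<Longrightarrow> t \<le> 1 \<Longrightarrow> c \<le> t * K" "K \<ge> 0"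
  shows "c \<le> 0"
proof (rule ccontr)
  assume "\<not> c \<le> 0"
  then have c: "c > 0" by simp
  show False
  proof (cases "K = 0")
    case True then show ?thesis using assms(1)[of 1] c by simp
  next
    case False
    then have K: "K > 0" using assms(2) by simp
    define t where "t = min 1 (c / (2*K))"
    have "0 < t" "t \<le> 1" using c K by (auto simp: t_def)
    then have "c \<le> t * K" by (rule assms(1))
    also have "\<dots> \<le> c / (2*K) * K" using K by (intro mult_right_mono) (auto simp: t_def)
    also have "\<dots> = c / 2" using K by simp
    finally show False using c by simp
  qed
qed

theorem proposition2:
  fixes L :: "'m::finite \<Rightarrow> real \<Rightarrow> real^'p \<Rightarrow> real"
    and n :: "'m \<Rightarrow> nat"
    and E :: "('m \<times> 'm) set"
    and r :: "'m \<Rightarrow> 'm \<Rightarrow> real"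
    and P :: "real^'p \<Rightarrow> real \<Rightarrow> real \<Rightarrow> real"
    and Theta :: "real^'p \<Rightarrow> real \<Rightarrow> real \<Rightarrow> real^'p"
    and lam1 lam2 lam3 gamma :: real
    and w0h :: "real^'m"
    and Wh Uh Oh :: "real^'p^'m"
  assumes n_pos: "\<And>m. n m > 0"
    and L_diff: "\<And>m x. (\<lambda>x'. L m (fst x') (snd x')) differentiable (at x)"
    and r_nonneg: "\<And>m1 m2. (m1, m2) \<in> E \<Longrightarrow> r m1 m2 \<ge> 0"
    and lam1_pos: "lam1 > 0" and lam2_nonneg: "lam2 \<ge> 0" and lam3_nonneg: "lam3 \<ge> 0"
    and Theta_assoc: "is_thresholding P Theta gamma"
    and fix_W: "\<And>m a w. L m (w0h $ m) (Wh $ m) / real (n m)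
                   + lam1 / 2 * (norm (Wh $ m - Uh $ m - Oh $ m))\<^sup>2
                 \<le> L m a w / real (n m) + lam1 / 2 * (norm (w - Uh $ m - Oh $ m))\<^sup>2"
    and fix_U: "\<And>U. LMR L n E r P lam1 lam2 lam3 gamma w0h Wh Uh Oh
                    \<le> LMR L n E r P lam1 lam2 lam3 gamma w0h Wh U Oh"
    and fix_O: "\<And>m. Oh $ m = Theta (Wh $ m - Uh $ m) (lam3 / lam1) gamma"
  shows "(\<forall>m. \<exists>G. GDERIV (\<lambda>x'. L m (fst x') (snd x') / real (n m)) (w0h $ m, Wh $ m) :> G
              \<and> G + lam1 *\<^sub>R (0, psi Theta (Wh $ m - Uh $ m) (lam3 / lam1) gamma) = 0)
       \<and> (\<exists>s\<in>subdiff (gfun E r) Uh.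
              0 = - (lam1 *\<^sub>R Psi Theta (Wh - Uh) (lam3 / lam1) gamma) + lam2 *\<^sub>R s)"
proof -
  have psi_eq: "psi Theta (Wh $ m - Uh $ m) (lam3 / lam1) gamma = Wh $ m - Uh $ m - Oh $ m" for m
    by (simp add: psi_def fix_O)
  show ?thesis
proof
  show "\<forall>m. \<exists>G. GDERIV (\<lambda>x'. L m (fst x') (snd x') / real (n m)) (w0h $ m, Wh $ m) :> G
              \<and> G + lam1 *\<^sub>R (0, psi Theta (Wh $ m - Uh $ m) (lam3 / lam1) gamma) = 0"
  proof
    fix m
    define x0 where "x0 = (w0h $ m, Wh $ m)"
    define c where "c = Uh $ m + Oh $ m"
    define a where "a = Wh $ m - c"
    have a_eq: "psi Theta (Wh $ m - Uh $ m) (lam3 / lam1) gamma = a"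
      by (simp add: psi_eq a_def c_def)
    obtain D where D: "((\<lambda>x'. L m (fst x') (snd x')) has_derivative D) (at x0)"
      using L_diff unfolding differentiable_def by blast
    have Df: "((\<lambda>x'. L m (fst x') (snd x') / real (n m)) has_derivative (\<lambda>h. D h / real (n m))) (at x0)"
      using D n_pos[of m] by (intro derivative_eq_intros) auto
    have Dq: "((\<lambda>x'::real \<times> (real^'p). lam1/2 * inner (snd x' - c) (snd x' - c)) has_derivative
        (\<lambda>h. lam1/2 * (inner (snd h) (snd x0 - c) + inner (snd x0 - c) (snd h)))) (at x0)"
      by (auto intro!: derivative_eq_intros)
    have Dsum: "((\<lambda>x'. L m (fst x') (snd x') / real (n m) + lam1/2 * inner (snd x' - c) (snd x' - c)) has_derivative
        (\<lambda>h. D h / real (n m) + lam1/2 * (inner (snd h) (snd x0 - c) + inner (snd x0 - c) (snd h)))) (at x0)"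
      by (rule has_derivative_add[OF Df Dq])
    have minx: "\<forall>\<^sub>F y in at x0. (\<lambda>x'. L m (fst x') (snd x') / real (n m) + lam1/2 * inner (snd x' - c) (snd x' - c)) x0
        \<le> (\<lambda>x'. L m (fst x') (snd x') / real (n m) + lam1/2 * inner (snd x' - c) (snd x' - c)) y"
    proof (rule always_eventually, rule allI)
      fix y :: "real \<times> (real^'p)"
      show "(\<lambda>x'. L m (fst x') (snd x') / real (n m) + lam1/2 * inner (snd x' - c) (snd x' - c)) x0
        \<le> (\<lambda>x'. L m (fst x') (snd x') / real (n m) + lam1/2 * inner (snd x' - c) (snd x' - c)) y"
        using fix_W[of m "fst y" "snd y"]
        by (simp add: x0_def c_def power2_norm_eq_inner diff_diff_eq)
    qed
    have z: "(\<lambda>h. D h / real (n m) + lam1/2 * (inner (snd h) (snd x0 - c) + inner (snd x0 - c) (snd h))) = (\<lambda>h. 0)"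
      by (rule has_derivative_local_min[OF Dsum minx])
    have Dh: "D h / real (n m) = inner h (- (lam1 *\<^sub>R (0, a)))" for h
    proof -
      have "D h / real (n m) + lam1/2 * (inner (snd h) (snd x0 - c) + inner (snd x0 - c) (snd h)) = 0"
        using fun_cong[OF z, of h] by simp
      then show ?thesis
        by (cases h) (simp add: inner_prod_def x0_def a_def inner_commute algebra_simps)
    qed
    have "(\<lambda>h. D h / real (n m)) = (\<lambda>h. inner h (- (lam1 *\<^sub>R (0, a))))"
      using Dh by (rule ext)
    then have "GDERIV (\<lambda>x'. L m (fst x') (snd x') / real (n m)) (w0h $ m, Wh $ m) :> - (lam1 *\<^sub>R (0, a))"
      using Df unfolding gderiv_def x0_def by simp
    then show "\<exists>G. GDERIV (\<lambda>x'. L m (fst x') (snd x') / real (n m)) (w0h $ m, Wh $ m) :> G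
              \<and> G + lam1 *\<^sub>R (0, psi Theta (Wh $ m - Uh $ m) (lam3 / lam1) gamma) = 0"
      unfolding a_eq by (intro exI[of _ "- (lam1 *\<^sub>R (0, a))"]) (simp add: zero_prod_def)
  qed
next
  show "\<exists>s\<in>subdiff (gfun E r) Uh.
              0 = - (lam1 *\<^sub>R Psi Theta (Wh - Uh) (lam3 / lam1) gamma) + lam2 *\<^sub>R s"
  proof -
    define A where "A = Wh - Uh - Oh"
    have PsiA: "Psi Theta (Wh - Uh) (lam3 / lam1) gamma = A"
      by (simp add: Psi_def A_def vec_eq_iff psi_eq)
    define C where "C = (\<Sum>m\<in>UNIV. L m (w0h $ m) (Wh $ m) / real (n m)) + (\<Sum>m\<in>UNIV. P (Oh $ m) lam3 gamma)"
    have LMR_eq: "LMR L n E r P lam1 lam2 lam3 gamma w0h Wh U Oh = C + lam1/2 * (norm (Wh - U - Oh))\<^sup>2 + lam2 * gfun E r U" for U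
    proof -
      have "(\<Sum>m\<in>UNIV. (norm (Wh $ m - U $ m - Oh $ m))\<^sup>2) = (norm (Wh - U - Oh))\<^sup>2"
        using sumsq_vec[of "Wh - U - Oh"] by simp
      then show ?thesis unfolding LMR_def gfun_def C_def by simp
    qed
    have gconv: "gfun E r (Uh + t *\<^sub>R (Y - Uh)) \<le> (1 - t) * gfun E r Uh + t * gfun E r Y"
      if t: "0 \<le> t" "t \<le> 1" for t and Y :: "real^'p^'m"
    proof -
      have e: "r a b * norm ((Uh + t *\<^sub>R (Y - Uh)) $ a - (Uh + t *\<^sub>R (Y - Uh)) $ b)
          \<le> (1 - t) * (r a b * norm (Uh $ a - Uh $ b)) + t * (r a b * norm (Y $ a - Y $ b))"
        if "(a,b) \<in> E" for a b
      proof -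
        have eq: "(Uh + t *\<^sub>R (Y - Uh)) $ a - (Uh + t *\<^sub>R (Y - Uh)) $ b
            = (1 - t) *\<^sub>R (Uh $ a - Uh $ b) + t *\<^sub>R (Y $ a - Y $ b)"
          by (simp add: algebra_simps)
        have "norm ((1 - t) *\<^sub>R (Uh $ a - Uh $ b) + t *\<^sub>R (Y $ a - Y $ b))
            \<le> (1 - t) * norm (Uh $ a - Uh $ b) + t * norm (Y $ a - Y $ b)"
          using t by (metis (no_types, lifting) abs_of_nonneg diff_ge_0_iff_ge norm_scaleR norm_triangle_ineq)
        then have "r a b * norm ((1 - t) *\<^sub>R (Uh $ a - Uh $ b) + t *\<^sub>R (Y $ a - Y $ b))
            \<le> r a b * ((1 - t) * norm (Uh $ a - Uh $ b) + t * norm (Y $ a - Y $ b))"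
          using r_nonneg[OF that] by (rule mult_left_mono)
        then show ?thesis unfolding eq by (simp add: algebra_simps)
      qed
      have "gfun E r (Uh + t *\<^sub>R (Y - Uh)) \<le> (\<Sum>(a,b)\<in>E. (1 - t) * (r a b * norm (Uh $ a - Uh $ b)) + t * (r a b * norm (Y $ a - Y $ b)))"
        unfolding gfun_def by (rule sum_mono) (use e in auto)
      also have "\<dots> = (1 - t) * gfun E r Uh + t * gfun E r Y"
        unfolding gfun_def by (simp add: sum.distrib sum_distrib_left case_prod_unfold)
      finally show ?thesis .
    qed
    have key: "lam1 * inner A (Y - Uh) \<le> lam2 * (gfun E r Y - gfun E r Uh)" for Y
    proof -
      define D where "D = Y - Uh"
      have "lam1 * inner A D - lam2 * (gfun E r Y - gfun E r Uh) \<le> 0"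
      proof (rule small_t)
        show "0 \<le> lam1/2 * (norm D)\<^sup>2" using lam1_pos by simp
        fix t :: real assume t: "0 < t" "t \<le> 1"
        have "C + lam1/2 * (norm A)\<^sup>2 + lam2 * gfun E r Uh
            \<le> C + lam1/2 * (norm (A - t *\<^sub>R D))\<^sup>2 + lam2 * gfun E r (Uh + t *\<^sub>R D)"
          using fix_U[of "Uh + t *\<^sub>R D"] unfolding LMR_eq A_def by (simp add: algebra_simps)
        moreover have "(norm (A - t *\<^sub>R D))\<^sup>2 = (norm A)\<^sup>2 - 2 * t * inner A D + t\<^sup>2 * (norm D)\<^sup>2"
          unfolding power2_norm_eq_inner by (simp add: inner_diff_left inner_diff_right inner_commute power2_eq_square algebra_simps)
        moreover have "lam2 * gfun E r (Uh + t *\<^sub>R D) \<le> lam2 * ((1 - t) * gfun E r Uh + t * gfun E r Y)"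
          using gconv[of t Y] t lam2_nonneg unfolding D_def by (intro mult_left_mono) auto
        ultimately have "0 \<le> lam1/2 * (t * t * (norm D)\<^sup>2) - lam1 * (t * inner A D) + lam2 * (t * gfun E r Y) - lam2 * (t * gfun E r Uh)"
        proof -
          assume a1: "C + lam1/2 * (norm A)\<^sup>2 + lam2 * gfun E r Uh
            \<le> C + lam1/2 * (norm (A - t *\<^sub>R D))\<^sup>2 + lam2 * gfun E r (Uh + t *\<^sub>R D)"
            and a2: "(norm (A - t *\<^sub>R D))\<^sup>2 = (norm A)\<^sup>2 - 2 * t * inner A D + t\<^sup>2 * (norm D)\<^sup>2"
            and a3: "lam2 * gfun E r (Uh + t *\<^sub>R D) \<le> lam2 * ((1 - t) * gfun E r Uh + t * gfun E r Y)"
          have h1: "lam1/2 * (norm (A - t *\<^sub>R D))\<^sup>2 = lam1/2 * (norm A)\<^sup>2 - lam1 * (t * inner A D) + lam1/2 * (t * t * (norm D)\<^sup>2)"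
            unfolding a2 by (simp add: algebra_simps power2_eq_square)
          have h2: "lam2 * ((1 - t) * gfun E r Uh + t * gfun E r Y) = lam2 * gfun E r Uh - lam2 * (t * gfun E r Uh) + lam2 * (t * gfun E r Y)"
            by (simp add: algebra_simps)
          show ?thesis using a1 a3 h1 h2 by linarith
        qed
        then have "0 \<le> t * (lam1/2 * t * (norm D)\<^sup>2 - lam1 * inner A D + lam2 * (gfun E r Y - gfun E r Uh))"
          by (simp add: algebra_simps)
        then have "0 \<le> lam1/2 * t * (norm D)\<^sup>2 - lam1 * inner A D + lam2 * (gfun E r Y - gfun E r Uh)"
          using t by (simp add: zero_le_mult_iff)
        then show "lam1 * inner A D - lam2 * (gfun E r Y - gfun E r Uh) \<le> t * (lam1/2 * (norm D)\<^sup>2)"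
          by (simp add: algebra_simps)
      qed
      then show ?thesis unfolding D_def by simp
    qed
    show ?thesis
    proof (cases "lam2 = 0")
      case True
      have "lam1 * inner A A \<le> 0" using key[of "Uh + A"] True by simp
      then have "inner A A \<le> 0" using lam1_pos by (simp add: mult_le_0_iff)
      then have "A = 0" by (metis inner_gt_zero_iff not_le)
      have "\<exists>s. s \<in> subdiff (gfun E r) Uh" by (rule gfun_subgrad_exists) (rule r_nonneg)
      then obtain s where "s \<in> subdiff (gfun E r) Uh" ..
      then show ?thesis by (intro bexI[of _ s]) (simp_all add: True PsiA \<open>A = 0\<close>)
    next
      case False
      then have l2: "lam2 > 0" using lam2_nonneg by simp
      define s where "s = (lam1 / lam2) *\<^sub>R A"
      have "s \<in> subdiff (gfun E r) Uh"
        unfolding subdiff_def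
      proof clarify
        fix Y
        have "inner s (Y - Uh) = (lam1 * inner A (Y - Uh)) / lam2" by (simp add: s_def)
        also have "\<dots> \<le> (lam2 * (gfun E r Y - gfun E r Uh)) / lam2"
          using key[of Y] l2 by (intro divide_right_mono) auto
        also have "\<dots> = gfun E r Y - gfun E r Uh" using l2 by simp
        finally show "gfun E r Uh + inner s (Y - Uh) \<le> gfun E r Y" by simp
      qed
      moreover have "0 = - (lam1 *\<^sub>R Psi Theta (Wh - Uh) (lam3 / lam1) gamma) + lam2 *\<^sub>R s"
        using l2 by (simp add: PsiA s_def)
      ultimately show ?thesis by blast
    qed
  qed
qed
qed
end
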